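(* For any $\lambda>0$ and $\alpha\in(0,1)$, $$\sum_{k=1}^{\infty}\frac{\lambda^{\alpha k-1}k^{1-\alpha}}{((k-1)!)^{\alpha}}\ge\sum_{k=0}^{\infty}\frac{\lambda^{\alpha k}}{(k!)^{\alpha}},$$ while for any $\lambda>0$ and $\alpha>1$, $$\sum_{k=1}^{\infty}\frac{\lambda^{\alpha k-1}k^{1-\alpha}}{((k-1)!)^{\alpha}}\le\sum_{k=0}^{\infty}\frac{\lambda^{\alpha k}}{(k!)^{\alpha}}.$$ *)

theory Defs
  imports "HOL-Analysis.Analysis"
begin

end

theory Submission
  imports Defs
begin

lemma ratio0_summable:
  fixes f :: "nat \<Rightarrow> real"
  assumes pos: "\<And>n. f n > 0" and lim: "(\<lambda>n. f (Suc n) / f n) \<longlonglongrightarrow> 0"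
  shows "summable f"
proof -
  have "eventually (\<lambda>n. f (Suc n) / f n < 1/2) sequentially"
    by (rule order_tendstoD(2)[OF lim]) simp
  then obtain N where N: "\<And>n. n \<ge> N \<Longrightarrow> f (Suc n) / f n < 1/2"
    by (auto simp: eventually_sequentially)
  show ?thesis
  proof (rule summable_ratio_test[of "1/2" N])
    fix n assume "n \<ge> N"
    then have "f (Suc n) < 1/2 * f n" using N[of n] pos[of n] by (simp add: divide_less_eq)
    then show "norm (f (Suc n)) \<le> 1/2 * norm (f n)" using pos[of n] pos[of "Suc n"] by simp
  qed simp
qed

lemma lim_shift: "(\<lambda>n. lam / real (Suc n)) \<longlonglongrightarrow> (0::real)"
proof -
  have "(\<lambda>n. lam / real n) \<longlonglongrightarrow> (0::real)" by (rule lim_const_over_n)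
  then show ?thesis using LIMSEQ_Suc by blast
qed

lemma powr_id1:
  fixes c R a :: real
  assumes "c > 0" "R > 0"
  shows "(c * (R * c powr - a)) powr a * (R * c powr - a) powr (1 - a) = R"
proof -
  have p: "(c * (R * c powr - a)) powr a * (R * c powr - a) powr (1 - a) > 0"
    using assms by simp
  have "ln ((c * (R * c powr - a)) powr a * (R * c powr - a) powr (1 - a)) = ln R"
    using assms by (simp add: ln_mult ln_powr algebra_simps)
  then show ?thesis using p assms by simp
qed

lemma powr_id2:
  fixes c R a :: real
  assumes "c > 0" "R > 0" "a > 0"
  shows "R powr (1/a) * (R * c powr - a) powr (1 - 1/a) = c * (R * c powr - a)"
proof -
  have p: "R powr (1/a) * (R * c powr - a) powr (1 - 1/a) > 0"
    using assms by simp
  have "ln (R powr (1/a) * (R * c powr - a) powr (1 - 1/a)) = ln (c * (R * c powr - a))"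
    using assms by (simp add: ln_mult ln_powr algebra_simps diff_divide_distrib)
  then show ?thesis using p assms by simp
qed

theorem lemma2:
  fixes lam a :: real
  assumes "lam > 0"
  shows "(0 < a \<and> a < 1 \<longrightarrow>
           (\<Sum>k. lam powr (a * real (Suc k) - 1) * real (Suc k) powr (1 - a) / (fact k) powr a)
             \<ge> (\<Sum>k. lam powr (a * real k) / (fact k) powr a))
       \<and> (a > 1 \<longrightarrow>
           (\<Sum>k. lam powr (a * real (Suc k) - 1) * real (Suc k) powr (1 - a) / (fact k) powr a)
             \<le> (\<Sum>k. lam powr (a * real k) / (fact k) powr a))"
proof -
  define R where "R k = lam powr (a * real k) / (fact k) powr a" for k
  define L where "L k = lam powr (a * real (Suc k) - 1) * real (Suc k) powr (1 - a) / (fact k) powr a" for k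
  define c where "c k = real (Suc k) / lam" for k
  have cpos: "c k > 0" for k using assms by (simp add: c_def)
  have Rpos: "R k > 0" for k using assms by (simp add: R_def)
  have Lpos: "L k > 0" for k using assms by (simp add: L_def)
  have R0: "R 0 = 1" using assms by (simp add: R_def)
  
  have I1: "L k = c k * R (Suc k)" for k
  proof -
    have f: "(fact (Suc k) :: real) powr a = real (Suc k) powr a * fact k powr a"
      by (simp add: powr_mult del: of_nat_Suc)
    have "lam powr (a * real (Suc k) - 1) = lam powr (a * real (Suc k)) / lam"
      using assms by (simp add: powr_diff)
    moreover have "real (Suc k) powr (1 - a) = real (Suc k) / real (Suc k) powr a"
      by (simp add: powr_diff del: of_nat_Suc)
    ultimately show ?thesis unfolding L_def R_def c_def f
      using assms by (simp add: field_simps del: of_nat_Suc) (metis mult.assoc mult.left_commute)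
  qed
  have I2: "R (Suc k) = R k * c k powr (- a)" for k
  proof -
    have f: "(fact (Suc k) :: real) powr a = real (Suc k) powr a * fact k powr a"
      by (simp add: powr_mult del: of_nat_Suc)
    have e: "lam powr (a * real (Suc k)) = lam powr (a * real k) * lam powr a"
      by (simp add: powr_add[symmetric] algebra_simps)
    have "c k powr (- a) = lam powr a / real (Suc k) powr a"
      unfolding c_def using assms by (simp add: powr_minus powr_divide del: of_nat_Suc)
    then show ?thesis unfolding R_def f e by (simp add: field_simps del: of_nat_Suc)
  qed
  show ?thesis
  proof (cases "a > 0")
    case False then show ?thesis by simp
  next
    case apos: True
  have sumR: "summable R"
  proof (rule ratio0_summable[OF Rpos])
    have "(\<lambda>n. (lam / real (Suc n)) powr a) \<longlonglongrightarrow> 0"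
      by (rule tendsto_zero_powrI[OF lim_shift tendsto_const]) (use assms apos in auto)
    moreover have "R (Suc n) / R n = (lam / real (Suc n)) powr a" for n
      using I2[of n] Rpos[of n] cpos[of n] assms
      by (simp add: c_def powr_minus powr_divide del: of_nat_Suc)
    ultimately show "(\<lambda>n. R (Suc n) / R n) \<longlonglongrightarrow> 0" by simp
  qed
  have sumL: "summable L"
  proof (rule ratio0_summable[OF Lpos])
    have "(\<lambda>n. c (Suc n) / c n * (lam / real (Suc (Suc n))) powr a) \<longlonglongrightarrow> 1 * 0"
    proof (rule tendsto_mult)
      have "(\<lambda>n. real (Suc (Suc n)) / real (Suc n)) \<longlonglongrightarrow> 1"
        using LIMSEQ_Suc[OF LIMSEQ_Suc_n_over_n] by simp
      then show "(\<lambda>n. c (Suc n) / c n) \<longlonglongrightarrow> 1"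
        unfolding c_def using assms by (simp del: of_nat_Suc)
      show "(\<lambda>n. (lam / real (Suc (Suc n))) powr a) \<longlonglongrightarrow> 0"
        by (rule tendsto_zero_powrI[OF LIMSEQ_Suc[OF lim_shift] tendsto_const]) (use assms apos in auto)
    qed
    moreover have "L (Suc n) / L n = c (Suc n) / c n * (lam / real (Suc (Suc n))) powr a" for n
      using I1[of n] I1[of "Suc n"] I2[of "Suc n"] Rpos[of "Suc n"] cpos[of n] cpos[of "Suc n"] assms
      by (simp add: c_def powr_minus powr_divide del: of_nat_Suc)
    ultimately show "(\<lambda>n. L (Suc n) / L n) \<longlonglongrightarrow> 0" by simp
  qed
  have sumR1: "summable (\<lambda>k. R (Suc k))" using sumR by (simp add: summable_Suc_iff)
  have split: "(\<Sum>k. R k) = (\<Sum>k. R (Suc k)) + R 0"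
    using suminf_split_head[OF sumR] by simp
  have P1: "a < 1 \<longrightarrow> (\<Sum>k. R k) \<le> (\<Sum>k. L k)"
  proof
    assume a1: "a < 1"
    have Y: "R k \<le> a * L k + (1 - a) * R (Suc k)" for k
    proof -
      have "L k powr a * R (Suc k) powr (1 - a) = R k"
        unfolding I1 I2 by (rule powr_id1[OF cpos Rpos])
      then show ?thesis
        using Youngs_inequality_0[of a "1-a" "L k" "R (Suc k)"] apos a1 Lpos[of k] Rpos[of "Suc k"] by simp
    qed
    have "(\<Sum>k. R k) \<le> (\<Sum>k. a * L k + (1 - a) * R (Suc k))"
      by (rule suminf_le[OF Y sumR]) (intro summable_add summable_mult sumL sumR1)
    also have "\<dots> = a * (\<Sum>k. L k) + (1 - a) * (\<Sum>k. R (Suc k))"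
      using sumL sumR1 by (simp add: suminf_add[symmetric] suminf_mult)
    finally have h: "(\<Sum>k. R k) \<le> a * (\<Sum>k. L k) + (1 - a) * (\<Sum>k. R (Suc k))" .
    have h2: "a * (\<Sum>k. R (Suc k)) + 1 \<le> a * (\<Sum>k. L k)"
      using h unfolding split R0 by (simp add: algebra_simps)
    have h3: "a * (\<Sum>k. R k) \<le> a * (\<Sum>k. L k)"
      using h2 a1 unfolding split R0 by (simp add: algebra_simps)
    show "(\<Sum>k. R k) \<le> (\<Sum>k. L k)"
      using h3 apos by simp
  qed
  have P2: "a > 1 \<longrightarrow> (\<Sum>k. L k) \<le> (\<Sum>k. R k)"
  proof
    assume a1: "a > 1"
    have Y: "L k \<le> (1/a) * R k + (1 - 1/a) * R (Suc k)" for k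
    proof -
      have "R k powr (1/a) * R (Suc k) powr (1 - 1/a) = L k"
        unfolding I1 I2 by (rule powr_id2[OF cpos Rpos apos])
      then show ?thesis
        using Youngs_inequality_0[of "1/a" "1-1/a" "R k" "R (Suc k)"] apos a1 Rpos[of k] Rpos[of "Suc k"] by simp
    qed
    have "(\<Sum>k. L k) \<le> (\<Sum>k. (1/a) * R k + (1 - 1/a) * R (Suc k))"
      by (rule suminf_le[OF Y sumL]) (intro summable_add summable_mult sumR sumR1)
    also have "\<dots> = (1/a) * (\<Sum>k. R k) + (1 - 1/a) * (\<Sum>k. R (Suc k))"
      using sumR sumR1 by (simp add: suminf_add[symmetric] suminf_mult suminf_divide)
    also have "\<dots> = (\<Sum>k. R k) - (1 - 1/a)"
      unfolding split R0 by (simp add: algebra_simps)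
    finally have fin: "(\<Sum>k. L k) \<le> (\<Sum>k. R k) - (1 - 1/a)" .
    have "1/a < 1" using a1 by simp
    then show "(\<Sum>k. L k) \<le> (\<Sum>k. R k)" using fin by linarith
  qed
  show ?thesis using P1 P2 unfolding L_def R_def by simp
  qed
qed

end
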